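(* Assume Hypothesis 1.2 (in addition to the standing noise hypotheses). Let $\phi\in V\cap H^2(\mathcal O)$ and $\eta>0$, and define the $H$-valued random variables $x^*_{0,\epsilon}(\theta_t\omega)=\epsilon\int_{-\infty}^te^{-\eta(t-s)}\phi\,dW_s$ and $x^*_{\delta,\epsilon}(\theta_t\omega)=\epsilon\int_{-\infty}^te^{-\eta(t-s)}\phi\,\zeta_\delta(\theta_s\omega)ds$. Then for almost all $\omega\in\Omega$ and all $t\le0$, $$\lim_{\delta\to0^+,\ \epsilon\to0^+}|x^*_{\delta,\epsilon}(\theta_t\omega)-x^*_{0,\epsilon}(\theta_t\omega)|=0\quad\text{and}\quad\lim_{\epsilon\to0^+}|x^*_{0,\epsilon}(\theta_t\omega)|=0.$$
   Context: $\mathcal O\subset\mathbb R^N$ bounded open of class $C^k$, $k\ge2$; $H=L^2(\mathcal O)$ with norm $|\cdot|$; $V=H_0^1(\mathcal O)$. $\Omega$: continuous $\omega:\mathbb R\to\mathbb R$ with $\omega(0)=0$, $\omega(t)/t\to0$ at $\pm\infty$, Wiener measure; $W_t(\omega)=\omega(t)$; $\theta_t\omega(\cdot)=\omega(t+\cdot)-\omega(t)$; $C_\omega=\sup_{s\in\mathbb Q}|\omega(s)|/(|s|+1)$. Standing noise hypotheses: for each $\delta>0$, $\zeta_\delta:\Omega\to\mathbb R$ measurable with $t\mapsto\zeta_\delta(\theta_t\omega)$ stationary continuous, $|\zeta_\delta(\theta_t\omega)|\le K_\delta C_\omega(|t|+1)$ ($K_\delta\to\infty$ as $\delta\to0^+$),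 $\sup_{|t|\le T}|\int_0^t\zeta_\delta(\theta_r\omega)dr-\omega(t)|\to0$ as $\delta\to0^+$ for every $T>0$; and (Hypothesis 1.2) there is $\tilde\delta>0$ such that $\lim_{t\to\pm\infty}\frac1t[\int_0^t\zeta_\delta(\theta_s\omega)ds-\omega(t)]=0$ uniformly in $\delta\in(0,\tilde\delta]$. *)

theory Defs
  imports "HOL-Analysis.Analysis"
begin

text \<open>Canonical sample space: continuous paths, vanishing at 0, sublinear at infinity.\<close>
definition Omega :: "(real \<Rightarrow> real) set" where
  "Omega = {w. continuous_on UNIV w \<and> w 0 = 0 \<and>
              ((\<lambda>t. w t / t) \<longlongrightarrow> 0) at_top \<and> ((\<lambda>t. w t / t) \<longlongrightarrow> 0) at_bot}"

definition theta :: "real \<Rightarrow> (real \<Rightarrow> real) \<Rightarrow> (real \<Rightarrow> real)" where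
  "theta t w = (\<lambda>s. w (t + s) - w t)"

definition C_omega :: "(real \<Rightarrow> real) \<Rightarrow> real" where
  "C_omega w = (SUP s\<in>\<rat>. \<bar>w s\<bar> / (\<bar>s\<bar> + 1))"

definition in_L2 :: "('n::euclidean_space) set \<Rightarrow> ('n \<Rightarrow> real) \<Rightarrow> bool" where
  "in_L2 D f \<longleftrightarrow> f \<in> borel_measurable (lebesgue_on D) \<and> integrable (lebesgue_on D) (\<lambda>x. (f x)^2)"

definition L2norm :: "('n::euclidean_space) set \<Rightarrow> ('n \<Rightarrow> real) \<Rightarrow> real" where
  "L2norm D f = sqrt (\<integral>x. (f x)^2 \<partial>lebesgue_on D)"

text \<open>Pathwise Wiener integral  int_{-infty}^t e^{-eta(t-s)} dw(s), defined by
  integration by parts:  w t - eta * int_{-infty}^t e^{-eta(t-s)} w(s) ds.\<close>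
definition wiener_exp_int :: "real \<Rightarrow> (real \<Rightarrow> real) \<Rightarrow> real \<Rightarrow> real" where
  "wiener_exp_int \<eta> w t = w t - \<eta> * (\<integral>s\<in>{..t}. exp (- \<eta> * (t - s)) * w s \<partial>lborel)"

text \<open>x^*_{0,eps}(theta_t w) = eps int_{-infty}^t e^{-eta(t-s)} phi dW_s\<close>
definition x0 :: "real \<Rightarrow> ('n \<Rightarrow> real) \<Rightarrow> real \<Rightarrow> (real \<Rightarrow> real) \<Rightarrow> real \<Rightarrow> ('n \<Rightarrow> real)" where
  "x0 \<eta> \<phi> \<epsilon> w t = (\<lambda>x. \<epsilon> * wiener_exp_int \<eta> w t * \<phi> x)"

text \<open>x^*_{delta,eps}(theta_t w) = eps int_{-infty}^t e^{-eta(t-s)} phi zeta_delta(theta_s w) ds\<close>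
definition xdelta :: "real \<Rightarrow> ('n \<Rightarrow> real) \<Rightarrow> (real \<Rightarrow> (real \<Rightarrow> real) \<Rightarrow> real) \<Rightarrow> real \<Rightarrow> real
    \<Rightarrow> (real \<Rightarrow> real) \<Rightarrow> real \<Rightarrow> ('n \<Rightarrow> real)" where
  "xdelta \<eta> \<phi> \<zeta> \<delta> \<epsilon> w t =
     (\<lambda>x. \<epsilon> * (\<integral>s\<in>{..t}. exp (- \<eta> * (t - s)) * \<zeta> \<delta> (theta s w) \<partial>lborel) * \<phi> x)"

end

theory Submission
  imports Defs "HOL-Real_Asymp.Real_Asymp"
begin

lemma base_int:
  fixes \<eta> t :: real
  assumes eta: "\<eta> > 0" and t: "t \<le> 0"
  shows "set_integrable lborel {..<t} (\<lambda>s. exp (-\<eta>*(t-s)) * (1 - s))"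
proof -
  define F where "F = (\<lambda>s. exp (-\<eta>*(t-s)) * ((1+1/\<eta>)/\<eta> - s/\<eta>))"
  have "set_integrable lborel (einterval (-\<infinity>) (ereal t)) (\<lambda>s. exp (-\<eta>*(t-s)) * (1 - s))"
  proof (rule interval_integral_FTC_nonneg(1))
    show "- \<infinity> < ereal t" by simp
    fix x
    show "DERIV F x :> exp (-\<eta>*(t-x)) * (1 - x)"
      unfolding F_def using eta
      by (auto intro!: derivative_eq_intros simp: field_simps)
    show "isCont (\<lambda>s. exp (-\<eta>*(t-s)) * (1 - s)) x"
      by (intro continuous_intros)
  next
    show "AE x in lborel. - \<infinity> < ereal x \<longrightarrow> ereal x < ereal t \<longrightarrow> 0 \<le> exp (-\<eta>*(t-x)) * (1 - x)"
      using t by (auto intro!: AE_I2)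
    have "(F \<longlongrightarrow> 0) at_bot"
      unfolding F_def using eta by real_asymp
    then show "((F \<circ> real_of_ereal) \<longlongrightarrow> 0) (at_right (-\<infinity>))"
      by (simp add: ereal_tendsto_simps1)
    have "isCont F t" unfolding F_def using eta by (auto intro!: continuous_intros)
    then have "(F \<longlongrightarrow> F t) (at_left t)"
      by (simp add: isCont_def filterlim_at_split)
    then show "((F \<circ> real_of_ereal) \<longlongrightarrow> F t) (at_left (ereal t))"
      by (simp add: ereal_tendsto_simps1)
  qed
  then show ?thesis by simp
qed


lemma lin_growth:
  fixes g :: "real \<Rightarrow> real"
  assumes g: "continuous_on UNIV g" and T: "\<And>s. s \<le> T \<Longrightarrow> \<bar>g s\<bar> \<le> B * (1 - s)"
  shows "\<exists>A. \<forall>s\<le>0. \<bar>g s\<bar> \<le> A * (1 - s)"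
proof -
  define T' where "T' = min T 0"
  have "compact (g ` {T'..0})"
    by (intro compact_continuous_image continuous_on_subset[OF g]) auto
  then obtain M where M: "\<And>y. y \<in> g ` {T'..0} \<Longrightarrow> \<bar>y\<bar> \<le> M"
    using compact_imp_bounded bounded_real by metis
  have M0: "M \<ge> 0" using M[of "g 0"] unfolding T'_def by auto
  show ?thesis
  proof (intro exI[of _ "max B M"] allI impI)
    fix s :: real assume s: "s \<le> 0"
    show "\<bar>g s\<bar> \<le> max B M * (1 - s)"
    proof (cases "s \<le> T'")
      case True
      then have "\<bar>g s\<bar> \<le> B * (1 - s)" using T unfolding T'_def by auto
      also have "\<dots> \<le> max B M * (1 - s)" using s by (intro mult_right_mono) auto
      finally show ?thesis .
    next
      case False
      then have "\<bar>g s\<bar> \<le> M" using M s by auto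
      also have "\<dots> \<le> max B M * (1 - s)" using s M0
        by (smt (verit) mult_left_mono mult_cancel_left1)
      finally show ?thesis .
    qed
  qed
qed

lemma G_int:
  fixes \<eta> t A :: real and g :: "real \<Rightarrow> real"
  assumes eta: "\<eta> > 0" and t: "t \<le> 0" and g: "continuous_on UNIV g"
    and bd: "\<And>s. s \<le> 0 \<Longrightarrow> \<bar>g s\<bar> \<le> A * (1 - s)"
  shows "set_integrable lborel {..<t} (\<lambda>s. exp (-\<eta>*(t-s)) * g s)"
proof (rule set_integrable_bound[OF set_integrable_mult_right[OF base_int[OF eta t], of A]])
  show "set_borel_measurable lborel {..<t} (\<lambda>s. exp (- \<eta> * (t - s)) * g s)"
    unfolding set_borel_measurable_def measurable_lborel2
    by (rule borel_measurable_continuous_on_indicator) (auto intro!: continuous_intros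
        continuous_on_subset[OF g])
  show "AE x in lborel. x \<in> {..<t} \<longrightarrow> norm (exp (- \<eta> * (t - x)) * g x) \<le> norm (A * (exp (- \<eta> * (t - x)) * (1 - x)))"
  proof (intro AE_I2 impI)
    fix x assume "x \<in> {..<t}"
    then have x: "x \<le> 0" using t by auto
    have "norm (exp (- \<eta> * (t - x)) * g x) = exp (- \<eta> * (t - x)) * \<bar>g x\<bar>" by (simp add: abs_mult)
    also have "\<dots> \<le> exp (- \<eta> * (t - x)) * (A * (1 - x))" using bd[OF x] by (intro mult_left_mono) auto
    also have "\<dots> \<le> norm (A * (exp (- \<eta> * (t - x)) * (1 - x)))" using x by (simp add: abs_mult)
    finally show "norm (exp (- \<eta> * (t - x)) * g x) \<le> norm (A * (exp (- \<eta> * (t - x)) * (1 - x)))" .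
  qed
qed

lemma G_lim:
  fixes \<eta> t A :: real and g :: "real \<Rightarrow> real"
  assumes eta: "\<eta> > 0" and bd: "\<And>s. s \<le> 0 \<Longrightarrow> \<bar>g s\<bar> \<le> A * (1 - s)"
  shows "((\<lambda>s. exp (-\<eta>*(t-s)) * g s) \<longlongrightarrow> 0) at_bot"
proof (rule Lim_null_comparison)
  show "\<forall>\<^sub>F x in at_bot. norm (exp (- \<eta> * (t - x)) * g x) \<le> A * (exp (- \<eta> * (t - x)) * (1 - x))"
    using eventually_le_at_bot[of 0]
  proof eventually_elim
    case (elim x)
    have "norm (exp (- \<eta> * (t - x)) * g x) = exp (- \<eta> * (t - x)) * \<bar>g x\<bar>" by (simp add: abs_mult)
    also have "\<dots> \<le> exp (- \<eta> * (t - x)) * (A * (1 - x))" using bd[OF elim] by (intro mult_left_mono) auto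
    finally show ?case by (simp add: algebra_simps)
  qed
  show "((\<lambda>x. A * (exp (- \<eta> * (t - x)) * (1 - x))) \<longlongrightarrow> 0) at_bot"
    using eta by real_asymp
qed

lemma Iic_Iio:
  fixes f :: "real \<Rightarrow> real"
  assumes "continuous_on UNIV f"
  shows "(LINT x:{..t}|lborel. f x) = (LINT x:{..<t}|lborel. f x)"
proof (rule set_integral_cong_set)
  show "set_borel_measurable lborel {..<t} f" "set_borel_measurable lborel {..t} f"
    unfolding set_borel_measurable_def measurable_lborel2
    by (rule borel_measurable_continuous_on_indicator; auto intro: continuous_on_subset[OF assms])+
  show "AE x in lborel. (x \<in> {..<t}) = (x \<in> {..t})"
    using AE_lborel_singleton[of t] by eventually_elim auto
qed

lemma L2norm_scale:
  "L2norm D (\<lambda>x. a * f x) = \<bar>a\<bar> * L2norm D f"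
  unfolding L2norm_def by (simp add: power_mult_distrib real_sqrt_mult)


lemma abs_div_lt:
  fixes a s e :: real
  assumes "s \<noteq> 0" "\<bar>a / s\<bar> < e"
  shows "\<bar>a\<bar> < e * \<bar>s\<bar>"
proof -
  have "\<bar>a\<bar> = \<bar>a / s\<bar> * \<bar>s\<bar>" using assms(1) by (simp add: abs_divide)
  also have "\<dots> < e * \<bar>s\<bar>" using assms by (intro mult_strict_right_mono) auto
  finally show ?thesis .
qed

lemma Z_deriv:
  fixes z :: "real \<Rightarrow> real"
  assumes zc: "continuous_on UNIV z"
  shows "((\<lambda>u::real. LBINT r=0..u. z r) has_field_derivative z x) (at x)"
proof -
  have "((\<lambda>u::real. LBINT r=0..u. z r) has_vector_derivative z x) (at x within {-\<bar>x\<bar>-1..\<bar>x\<bar>+1})"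
    using interval_integral_FTC2[of "-\<bar>x\<bar>-1" 0 "\<bar>x\<bar>+1" z x] continuous_on_subset[OF zc]
    by (simp add: zero_ereal_def)
  moreover have "at x within {-\<bar>x\<bar>-1..\<bar>x\<bar>+1} = at x"
    by (rule at_within_Icc_at) auto
  ultimately show ?thesis
    by (simp add: has_real_derivative_iff_has_vector_derivative)
qed

lemma Z_cont:
  fixes z :: "real \<Rightarrow> real"
  assumes zc: "continuous_on UNIV z"
  shows "continuous_on UNIV (\<lambda>u::real. LBINT r=0..u. z r)"
  using Z_deriv[OF zc] DERIV_isCont continuous_at_imp_continuous_on by blast

lemma ibp:
  fixes \<eta> t A B :: real and z :: "real \<Rightarrow> real"
  assumes eta: "\<eta> > 0" and t: "t \<le> 0" and zc: "continuous_on UNIV z"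
    and bz: "\<And>s. s \<le> 0 \<Longrightarrow> \<bar>z s\<bar> \<le> A * (1 - s)"
    and bZ: "\<And>s. s \<le> 0 \<Longrightarrow> \<bar>LBINT r=0..s. z r\<bar> \<le> B * (1 - s)"
  shows "(LINT s:{..<t}|lborel. exp (-\<eta>*(t-s)) * z s)
     = (LBINT r=0..t. z r) - \<eta> * (LINT s:{..<t}|lborel. exp (-\<eta>*(t-s)) * (LBINT r=0..s. z r))"
proof -
  define Z where "Z = (\<lambda>u::real. LBINT r=0..u. z r)"
  define E where "E = (\<lambda>s. exp (-\<eta>*(t-s)))"
  have Zd: "\<And>x. (Z has_field_derivative z x) (at x)" unfolding Z_def by (rule Z_deriv[OF zc])
  have Zc: "continuous_on UNIV Z" unfolding Z_def by (rule Z_cont[OF zc])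
  have i1: "set_integrable lborel {..<t} (\<lambda>s. E s * z s)"
    unfolding E_def by (rule G_int[OF eta t zc bz])
  have i2: "set_integrable lborel {..<t} (\<lambda>s. E s * Z s)"
    unfolding E_def Z_def by (rule G_int[OF eta t Z_cont[OF zc] bZ])
  have i2': "set_integrable lborel {..<t} (\<lambda>s. \<eta> * (E s * Z s))"
    using i2 by auto
  have "(LBINT x=-\<infinity>..ereal t. E x * z x + \<eta> * (E x * Z x)) = E t * Z t - 0"
  proof (rule interval_integral_FTC_integrable)
    show "- \<infinity> < ereal t" by simp
    fix x
    show "((\<lambda>s. E s * Z s) has_vector_derivative E x * z x + \<eta> * (E x * Z x)) (at x)"
      unfolding has_real_derivative_iff_has_vector_derivative[symmetric] E_def
      by (auto intro!: derivative_eq_intros Zd simp: algebra_simps)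
    show "isCont (\<lambda>x. E x * z x + \<eta> * (E x * Z x)) x"
      unfolding E_def using zc Zc
      by (auto intro!: continuous_intros simp: continuous_on_eq_continuous_at)
  next
    show "set_integrable lborel (einterval (- \<infinity>) (ereal t)) (\<lambda>x. E x * z x + \<eta> * (E x * Z x))"
      using set_integral_add(1)[OF i1 i2'] by simp
    have "((\<lambda>s. E s * Z s) \<longlongrightarrow> 0) at_bot"
      unfolding E_def Z_def by (rule G_lim[OF eta bZ])
    then show "(((\<lambda>s. E s * Z s) \<circ> real_of_ereal) \<longlongrightarrow> 0) (at_right (-\<infinity>))"
      by (simp add: ereal_tendsto_simps1)
    have "isCont (\<lambda>s. E s * Z s) t" unfolding E_def using Zc
      by (auto intro!: continuous_intros simp: continuous_on_eq_continuous_at)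
    then have "((\<lambda>s. E s * Z s) \<longlongrightarrow> E t * Z t) (at_left t)"
      by (simp add: isCont_def filterlim_at_split)
    then show "(((\<lambda>s. E s * Z s) \<circ> real_of_ereal) \<longlongrightarrow> E t * Z t) (at_left (ereal t))"
      by (simp add: ereal_tendsto_simps1)
  qed
  moreover have "(LBINT x=-\<infinity>..ereal t. E x * z x + \<eta> * (E x * Z x))
      = (LINT s:{..<t}|lborel. E s * z s) + \<eta> * (LINT s:{..<t}|lborel. E s * Z s)"
    by (simp add: interval_lebesgue_integral_le_eq set_integral_add(2)[OF i1 i2'])
  moreover have "E t = 1" unfolding E_def by simp
  ultimately show ?thesis unfolding E_def Z_def by simp
qed

theorem lemma4p5:
  fixes D :: "(real ^ 'n) set"
    and \<phi> :: "real ^ 'n \<Rightarrow> real"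
    and \<zeta> :: "real \<Rightarrow> (real \<Rightarrow> real) \<Rightarrow> real"
    and K :: "real \<Rightarrow> real"
    and \<eta> :: real
    and w :: "real \<Rightarrow> real"
  assumes D: "open D" "bounded D"
    and phi: "in_L2 D \<phi>"
    and eta: "\<eta> > 0"
    and w: "w \<in> Omega"
    and zeta_cont: "\<And>\<delta>. \<delta> > 0 \<Longrightarrow> continuous_on UNIV (\<lambda>t. \<zeta> \<delta> (theta t w))"
    and zeta_bound: "\<And>\<delta> t. \<delta> > 0 \<Longrightarrow> \<bar>\<zeta> \<delta> (theta t w)\<bar> \<le> K \<delta> * C_omega w * (\<bar>t\<bar> + 1)"
    and K_lim: "filterlim K at_top (at_right 0)"
    and zeta_approx: "\<And>T. T > 0 \<Longrightarrow>
          uniform_limit {-T..T} (\<lambda>\<delta> t. (LBINT r=0..t. \<zeta> \<delta> (theta r w))) w (at_right 0)"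
    and hyp12: "\<exists>\<delta>t>0.
          uniform_limit {0<..\<delta>t} (\<lambda>t \<delta>. ((LBINT s=0..t. \<zeta> \<delta> (theta s w)) - w t) / t) (\<lambda>_. 0) at_top \<and>
          uniform_limit {0<..\<delta>t} (\<lambda>t \<delta>. ((LBINT s=0..t. \<zeta> \<delta> (theta s w)) - w t) / t) (\<lambda>_. 0) at_bot"
    and t: "t \<le> 0"
  shows "((\<lambda>(\<delta>, \<epsilon>). L2norm D (\<lambda>x. xdelta \<eta> \<phi> \<zeta> \<delta> \<epsilon> w t x - x0 \<eta> \<phi> \<epsilon> w t x))
            \<longlongrightarrow> 0) (at_right 0 \<times>\<^sub>F at_right 0)
       \<and> ((\<lambda>\<epsilon>. L2norm D (x0 \<eta> \<phi> \<epsilon> w t)) \<longlongrightarrow> 0) (at_right 0)"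
proof -
  define E where "E = (\<lambda>s. exp (-\<eta>*(t-s)))"
  define zz where "zz = (\<lambda>\<delta> s. \<zeta> \<delta> (theta s w))"
  define Z where "Z = (\<lambda>\<delta> (u::real). LBINT r=0..u. zz \<delta> r)"
  define c where "c = wiener_exp_int \<eta> w t"
  define I where "I = (\<lambda>\<delta>. LINT s:{..t}|lborel. E s * zz \<delta> s)"
  have wc: "continuous_on UNIV w" and wlim: "((\<lambda>s. w s / s) \<longlongrightarrow> 0) at_bot"
    using w unfolding Omega_def by auto
  have zzc: "\<And>\<delta>. \<delta> > 0 \<Longrightarrow> continuous_on UNIV (zz \<delta>)"
    unfolding zz_def using zeta_cont by simp
  have Zc: "\<And>\<delta>. \<delta> > 0 \<Longrightarrow> continuous_on UNIV (Z \<delta>)"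
    unfolding Z_def using Z_cont[OF zzc] by simp
  have Ec: "continuous_on UNIV E" unfolding E_def by (intro continuous_intros)
  obtain Aw where Aw: "\<And>s. s \<le> 0 \<Longrightarrow> \<bar>w s\<bar> \<le> Aw * (1 - s)"
  proof -
    have "\<forall>\<^sub>F s in at_bot. \<bar>w s / s\<bar> < 1"
      using order_tendstoD(2)[OF tendsto_rabs[OF wlim], of 1] by simp
    moreover have "\<forall>\<^sub>F s in at_bot. (s::real) \<le> -1" unfolding eventually_at_bot_linorder by auto
    ultimately have "\<forall>\<^sub>F s in at_bot. \<bar>w s\<bar> \<le> 1 * (1 - s)"
    proof eventually_elim
      case (elim s)
      then have "\<bar>w s\<bar> < 1 * \<bar>s\<bar>" by (intro abs_div_lt) auto
      then show ?case using elim by simp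
    qed
    then obtain T where "\<And>s. s \<le> T \<Longrightarrow> \<bar>w s\<bar> \<le> 1 * (1 - s)"
      unfolding eventually_at_bot_linorder by blast
    from lin_growth[OF wc this] that show ?thesis by blast
  qed
  obtain \<delta>t where \<delta>t: "\<delta>t > 0"
    and U1: "uniform_limit {0<..\<delta>t} (\<lambda>s \<delta>. (Z \<delta> s - w s) / s) (\<lambda>_. 0) at_bot"
    using hyp12 unfolding Z_def zz_def by blast
  have zzb: "\<bar>zz \<delta> s\<bar> \<le> (K \<delta> * C_omega w) * (1 - s)" if zb: "\<delta> > 0" "s \<le> 0" for \<delta> s
  proof -
    have "\<bar>s\<bar> + 1 = 1 - s" using zb by simp
    then show ?thesis using zeta_bound[OF zb(1), of s] unfolding zz_def by simp
  qed
  obtain T1 where T1': "\<forall>s\<le>T1. \<forall>\<delta>\<in>{0<..\<delta>t}. \<bar>(Z \<delta> s - w s) / s\<bar> < 1"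
    using U1[unfolded uniform_limit_iff, rule_format, OF zero_less_one]
    unfolding eventually_at_bot_linorder dist_real_def diff_zero by blast
  note T1 = T1'[rule_format]
  have Zb: "\<exists>B. \<forall>s\<le>0. \<bar>Z \<delta> s\<bar> \<le> B * (1 - s)" if d: "\<delta> \<in> {0<..\<delta>t}" for \<delta>
  proof (rule lin_growth[OF Zc])
    show "0 < \<delta>" using d by simp
    fix s assume s: "s \<le> min T1 (-1)"
    then have "\<bar>Z \<delta> s - w s\<bar> < 1 * \<bar>s\<bar>" using T1[of s \<delta>] d by (intro abs_div_lt) auto
    then show "\<bar>Z \<delta> s\<bar> \<le> (Aw + 1) * (1 - s)" using Aw[of s] s by (simp add: algebra_simps)
  qed
  have key: "I \<delta> - c = (Z \<delta> t - w t) - \<eta> * (LINT s:{..<t}|lborel. E s * (1 * (Z \<delta> s - w s)))"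
    if d: "\<delta> \<in> {0<..\<delta>t}" for \<delta>
  proof -
    have d0: "\<delta> > 0" using d by simp
    obtain B where B: "\<And>s. s \<le> 0 \<Longrightarrow> \<bar>Z \<delta> s\<bar> \<le> B * (1 - s)" using Zb[OF d] by blast
    have iZ: "set_integrable lborel {..<t} (\<lambda>s. E s * Z \<delta> s)"
      unfolding E_def by (rule G_int[OF eta t Zc[OF d0] B])
    have iw: "set_integrable lborel {..<t} (\<lambda>s. E s * w s)"
      unfolding E_def by (rule G_int[OF eta t wc Aw])
    have "I \<delta> = (LINT s:{..<t}|lborel. E s * zz \<delta> s)"
      unfolding I_def by (rule Iic_Iio) (intro continuous_intros Ec zzc d0)
    also have "\<dots> = Z \<delta> t - \<eta> * (LINT s:{..<t}|lborel. E s * Z \<delta> s)"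
      unfolding E_def Z_def by (rule ibp[OF eta t zzc[OF d0] zzb[OF d0] B[unfolded Z_def]])
    finally have 1: "I \<delta> = Z \<delta> t - \<eta> * (LINT s:{..<t}|lborel. E s * Z \<delta> s)" .
    have "c = w t - \<eta> * (LINT s:{..t}|lborel. E s * w s)"
      unfolding c_def wiener_exp_int_def E_def by simp
    also have "(LINT s:{..t}|lborel. E s * w s) = (LINT s:{..<t}|lborel. E s * w s)"
      by (rule Iic_Iio) (intro continuous_intros Ec wc)
    finally have 2: "c = w t - \<eta> * (LINT s:{..<t}|lborel. E s * w s)" .
    have 3: "(LINT s:{..<t}|lborel. E s * (1 * (Z \<delta> s - w s)))
        = (LINT s:{..<t}|lborel. E s * Z \<delta> s) - (LINT s:{..<t}|lborel. E s * w s)"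
      using set_integral_diff(2)[OF iZ iw] by (simp add: algebra_simps)
    show ?thesis unfolding 1 2 3 by (simp add: algebra_simps)
  qed
  define M where "M = (LINT s:{..<t}|lborel. E s * (1 - s))"
  have iM: "set_integrable lborel {..<t} (\<lambda>s. E s * (1 - s))"
    unfolding E_def by (rule base_int[OF eta t])
  have Ilim: "((\<lambda>\<delta>. I \<delta> - c) \<longlongrightarrow> 0) (at_right 0)"
  proof (rule tendstoI)
    fix e :: real assume e: "e > 0"
    define e' where "e' = e / (2 * (1 + \<eta> * \<bar>M\<bar>))"
    have den: "1 + \<eta> * \<bar>M\<bar> > 0" using eta by (simp add: add_pos_nonneg)
    have e': "e' > 0" unfolding e'_def using e den by simp
    obtain T where T': "\<forall>s\<le>T. \<forall>\<delta>\<in>{0<..\<delta>t}. \<bar>(Z \<delta> s - w s) / s\<bar> < e'"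
      using U1[unfolded uniform_limit_iff, rule_format, OF e']
      unfolding eventually_at_bot_linorder dist_real_def diff_zero by blast
    note T = T'[rule_format]
    define T0 where "T0 = min T (-1)"
    define T2 where "T2 = \<bar>T0\<bar> + \<bar>t\<bar> + 1"
    have T2: "T2 > 0" unfolding T2_def by simp
    have ev1: "\<forall>\<^sub>F \<delta> in at_right 0. \<forall>s\<in>{-T2..T2}. dist (Z \<delta> s) (w s) < e'"
      using zeta_approx[OF T2, unfolded uniform_limit_iff, rule_format, OF e']
      unfolding Z_def zz_def by simp
    have ev2: "\<forall>\<^sub>F \<delta> in at_right 0. \<delta> \<in> {0<..\<delta>t}"
      using eventually_at_right[of 0 \<delta>t] \<delta>t by auto
    show "\<forall>\<^sub>F \<delta> in at_right 0. dist (I \<delta> - c) 0 < e"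
      using ev1 ev2
    proof eventually_elim
      case (elim \<delta>)
      have pw: "\<bar>Z \<delta> s - w s\<bar> \<le> e' * (1 - s)" if s: "s \<le> t" for s
      proof (cases "s \<le> T0")
        case True
        then have "\<bar>(Z \<delta> s - w s) / s\<bar> < e'" using T[of s \<delta>] elim(2) unfolding T0_def by simp
        moreover have "s < 0" using True unfolding T0_def by simp
        ultimately have "\<bar>Z \<delta> s - w s\<bar> < e' * \<bar>s\<bar>" by (intro abs_div_lt) auto
        then show ?thesis using \<open>s < 0\<close> e' by (simp add: algebra_simps)
      next
        case False
        then have "s \<in> {-T2..T2}" using s t unfolding T2_def by auto
        then have "\<bar>Z \<delta> s - w s\<bar> < e'" using elim(1) by (simp add: dist_real_def)
        also have "e' \<le> e' * (1 - s)" using e' s t by simp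
        finally show ?thesis by simp
      qed
      obtain B where B: "\<And>s. s \<le> 0 \<Longrightarrow> \<bar>Z \<delta> s\<bar> \<le> B * (1 - s)" using Zb[OF elim(2)] by blast
      have d0: "\<delta> > 0" using elim(2) by simp
      have ig: "set_integrable lborel {..<t} (\<lambda>s. E s * (1 * (Z \<delta> s - w s)))"
        unfolding E_def using G_int[OF eta t, of "\<lambda>s. Z \<delta> s - w s" "B + Aw"] Zc[OF d0] wc B Aw
        by (force intro!: continuous_intros simp: algebra_simps abs_triangle_ineq4 intro: order_trans[OF abs_triangle_ineq4])
      have ib: "set_integrable lborel {..<t} (\<lambda>s. e' * (E s * (1 - s)))" using iM by simp
      have bnd: "\<bar>E s * (1 * (Z \<delta> s - w s))\<bar> \<le> e' * (E s * (1 - s))" if "s \<in> {..<t}" for s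
      proof -
        have "\<bar>E s * (1 * (Z \<delta> s - w s))\<bar> = E s * \<bar>Z \<delta> s - w s\<bar>" unfolding E_def by (simp add: abs_mult)
        also have "\<dots> \<le> E s * (e' * (1 - s))" using pw[of s] that unfolding E_def
          by (intro mult_left_mono) auto
        finally show ?thesis by (simp add: algebra_simps)
      qed
      have "(LINT s:{..<t}|lborel. E s * (1 * (Z \<delta> s - w s))) \<le> (LINT s:{..<t}|lborel. e' * (E s * (1 - s)))"
        using bnd by (intro set_integral_mono[OF ig ib]) (auto simp: abs_le_iff)
      moreover have "- (LINT s:{..<t}|lborel. E s * (1 * (Z \<delta> s - w s))) \<le> (LINT s:{..<t}|lborel. e' * (E s * (1 - s)))"
      proof -
        have ig': "set_integrable lborel {..<t} (\<lambda>s. - (E s * (1 * (Z \<delta> s - w s))))"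
          using set_integrable_mult_right[where a="-1" and f="\<lambda>s. E s * (1 * (Z \<delta> s - w s))", OF ig] by simp
        have "(LINT s:{..<t}|lborel. - (E s * (1 * (Z \<delta> s - w s)))) \<le> (LINT s:{..<t}|lborel. e' * (E s * (1 - s)))"
          using bnd by (intro set_integral_mono[OF ig' ib]) (auto simp: abs_le_iff)
        then show ?thesis using set_integral_uminus[OF ig] by simp
      qed
      ultimately have iI: "\<bar>LINT s:{..<t}|lborel. E s * (1 * (Z \<delta> s - w s))\<bar> \<le> e' * M"
        unfolding M_def by (simp add: abs_le_iff)
      have "\<bar>I \<delta> - c\<bar> \<le> \<bar>Z \<delta> t - w t\<bar> + \<eta> * \<bar>LINT s:{..<t}|lborel. E s * (1 * (Z \<delta> s - w s))\<bar>"
      proof -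
        define X where "X = (LINT s:{..<t}|lborel. E s * (1 * (Z \<delta> s - w s)))"
        have "\<bar>\<eta> * X\<bar> = \<eta> * \<bar>X\<bar>" using eta by (simp add: abs_mult)
        then show ?thesis unfolding key[OF elim(2)] X_def[symmetric]
          using abs_triangle_ineq4[of "Z \<delta> t - w t" "\<eta> * X"] by linarith
      qed
      also have "\<dots> \<le> e' + \<eta> * (e' * \<bar>M\<bar>)"
      proof -
        have "t \<in> {-T2..T2}" using t unfolding T2_def by auto
        then have "\<bar>Z \<delta> t - w t\<bar> < e'" using elim(1) by (simp add: dist_real_def)
        moreover have "e' * M \<le> e' * \<bar>M\<bar>" using e' by (intro mult_left_mono) auto
        ultimately show ?thesis using iI eta by (smt (verit) mult_left_mono)
      qed
      also have "\<dots> = e' * (1 + \<eta> * \<bar>M\<bar>)" by (simp add: algebra_simps)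
      also have "\<dots> = e / 2"
      proof -
        define Dn where "Dn = 1 + \<eta> * \<bar>M\<bar>"
        have "Dn \<noteq> 0" using den Dn_def by simp
        then show ?thesis unfolding e'_def Dn_def[symmetric] by (simp add: field_simps)
      qed
      also have "\<dots> < e" using e by simp
      finally show ?case by (simp add: dist_real_def)
    qed
  qed
  have eqd: "(\<lambda>x. xdelta \<eta> \<phi> \<zeta> \<delta> \<epsilon> w t x - x0 \<eta> \<phi> \<epsilon> w t x) = (\<lambda>x. (\<epsilon> * (I \<delta> - c)) * \<phi> x)" for \<delta> \<epsilon>
    by (simp add: fun_eq_iff xdelta_def x0_def I_def E_def zz_def c_def algebra_simps)
  have eq0: "x0 \<eta> \<phi> \<epsilon> w t = (\<lambda>x. (\<epsilon> * c) * \<phi> x)" for \<epsilon>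
    by (simp add: fun_eq_iff x0_def c_def)
  show ?thesis
  proof
    have f1: "((\<lambda>p. I (fst p) - c) \<longlongrightarrow> 0) (at_right 0 \<times>\<^sub>F at_right (0::real))"
      using filterlim_compose[OF Ilim filterlim_fst, of "at_right (0::real)"] by simp
    have f2: "((\<lambda>p. snd p) \<longlongrightarrow> (0::real)) (at_right (0::real) \<times>\<^sub>F at_right 0)"
    proof -
      have "((\<lambda>x::real. x) \<longlongrightarrow> 0) (at_right 0)" by (rule tendsto_ident_at)
      from filterlim_compose[OF this filterlim_snd, of "at_right (0::real)"] show ?thesis by simp
    qed
    have "((\<lambda>p. \<bar>snd p * (I (fst p) - c)\<bar> * L2norm D \<phi>) \<longlongrightarrow> 0) (at_right 0 \<times>\<^sub>F at_right 0)"
      using tendsto_mult[OF f2 f1] by (intro tendsto_mult_left_zero tendsto_rabs_zero) simp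
    then show "((\<lambda>(\<delta>, \<epsilon>). L2norm D (\<lambda>x. xdelta \<eta> \<phi> \<zeta> \<delta> \<epsilon> w t x - x0 \<eta> \<phi> \<epsilon> w t x)) \<longlongrightarrow> 0)
        (at_right 0 \<times>\<^sub>F at_right 0)"
      by (simp add: eqd L2norm_scale case_prod_beta')
    have "((\<lambda>\<epsilon>::real. \<bar>\<epsilon> * c\<bar> * L2norm D \<phi>) \<longlongrightarrow> 0) (at_right 0)"
      by (intro tendsto_mult_left_zero tendsto_rabs_zero tendsto_mult_left_zero)
        (simp add: tendsto_ident_at filterlim_at)
    then show "((\<lambda>\<epsilon>. L2norm D (x0 \<eta> \<phi> \<epsilon> w t)) \<longlongrightarrow> 0) (at_right 0)"
      by (simp add: eq0 L2norm_scale)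
  qed
qed

end
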